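(* Let $r\ge 2$ and $s_r\ge\cdots\ge s_1\ge 2$ be integers, $\alpha>0$ a real number, $s:=s_1+\cdots+s_r$, and $\mathbb{K}:=K^r_{s_1,\ldots,s_r}$. There is $n_0$ such that for all $n\ge n_0$ the following holds. Suppose $\mathcal{H}$ is an $m$ by $n$ semibipartite $r$-graph on $V_1,V_2$ such that (i) $m \le \frac{\alpha n}{8(s-s_1)}$, (ii) $d_{\mathcal{H}}(v) \ge \alpha n^{r-1}$ for every $v\in V_1$, and (iii) the set $L := \left\{v\in V_1 : d_{\mathcal{H}}(v) \ge \binom{n}{r-1} - \frac{\alpha n^{r-1}}{2s_1}\right\}$ has size at least $\min\left\{\frac{5s_1(s_1-1)}{\alpha},\ \frac{s_1-1}{s_1}m\right\}$. Then $\mathcal{H}$ contains $\lfloor m/s_1\rfloor$ pairwise vertex-disjoint ordered copies of $\mathbb{K}$.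
   Context: An $r$-graph is a set of $r$-element subsets (edges) of a finite vertex set; $d_{\mathcal{H}}(v)$ is the number of edges containing $v$. An $m$ by $n$ semibipartite $r$-graph on $V_1,V_2$ has vertex set $V_1\cup V_2$ (disjoint), $|V_1|=m$, $|V_2|=n$, and every edge contains exactly one vertex of $V_1$. $K^r_{s_1,\ldots,s_r}$ is the complete $r$-partite $r$-graph with parts $W_1,\ldots,W_r$ of sizes $s_1,\ldots,s_r$. An ordered copy of it in a semibipartite $r$-graph on $V_1,V_2$ is a copy with $W_1\subseteq V_1$ and $W_2,\ldots,W_r\subseteq V_2$. *)

theory Defs
  imports Complex_Main
begin

definition hdeg :: "'a set set \<Rightarrow> 'a \<Rightarrow> nat" where
  "hdeg H v = card {e \<in> H. v \<in> e}"

definition semibipartite :: "nat \<Rightarrow> 'a set set \<Rightarrow> 'a set \<Rightarrow> 'a set \<Rightarrow> bool" where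
  "semibipartite r H V1 V2 \<longleftrightarrow>
     finite V1 \<and> finite V2 \<and> V1 \<inter> V2 = {} \<and>
     (\<forall>e\<in>H. e \<subseteq> V1 \<union> V2 \<and> card e = r \<and> card (e \<inter> V1) = 1)"

definition ordered_copy ::
  "nat \<Rightarrow> (nat \<Rightarrow> nat) \<Rightarrow> 'a set set \<Rightarrow> 'a set \<Rightarrow> 'a set \<Rightarrow> (nat \<Rightarrow> 'a set) \<Rightarrow> bool" where
  "ordered_copy r s H V1 V2 W \<longleftrightarrow>
     (\<forall>i\<in>{1..r}. card (W i) = s i) \<and>
     W 1 \<subseteq> V1 \<and> (\<forall>i\<in>{2..r}. W i \<subseteq> V2) \<and>
     (\<forall>i\<in>{1..r}. \<forall>j\<in>{1..r}. i \<noteq> j \<longrightarrow> W i \<inter> W j = {}) \<and>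
     (\<forall>f. (\<forall>i\<in>{1..r}. f i \<in> W i) \<longrightarrow> f ` {1..r} \<in> H)"

end

theory Submission
  imports Defs
begin


lemma choose_le_pow': "(n::nat) choose k \<le> n ^ k"
  by (cases "k \<le> n") (auto simp: binomial_le_pow binomial_eq_0)

lemma card_ksets_le:
  assumes "finite X" "card X \<le> n"
  shows "card {g. g \<subseteq> X \<and> card g = k} \<le> n ^ k"
proof -
  have "card {g. g \<subseteq> X \<and> card g = k} = card X choose k" using n_subsets[OF assms(1)] .
  also have "\<dots> \<le> card X ^ k" by (rule choose_le_pow')
  also have "\<dots> \<le> n ^ k" using assms(2) by (simp add: power_mono)
  finally show ?thesis .
qed

lemma finite_ksets: "finite X \<Longrightarrow> finite {g. g \<subseteq> X \<and> card g = k}"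
  by (rule finite_subset[of _ "Pow X"]) auto

lemma double_count:
  assumes "finite A" "finite B"
  shows "(\<Sum>a\<in>A. card {b\<in>B. R a b}) = (\<Sum>b\<in>B. card {a\<in>A. R a b})"
proof -
  have 1: "\<And>a. card {b\<in>B. R a b} = (\<Sum>b\<in>B. if R a b then 1 else 0)"
    using sum.inter_filter[OF assms(2), of "\<lambda>_. 1::nat"] by simp
  have 2: "\<And>b. card {a\<in>A. R a b} = (\<Sum>a\<in>A. if R a b then 1 else 0)"
    using sum.inter_filter[OF assms(1), of "\<lambda>_. 1::nat"] by simp
  show ?thesis unfolding 1 2 by (rule sum.swap)
qed

lemma exists_ge_avg:
  fixes f :: "'a \<Rightarrow> real"
  assumes "finite A" "A \<noteq> {}"
  shows "\<exists>x\<in>A. sum f A \<le> real (card A) * f x"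
proof -
  have "Max (f ` A) \<in> f ` A" using assms by simp
  then obtain x where x1: "x \<in> A" "f x = Max (f ` A)" by auto
  have x: "x \<in> A" "\<forall>y\<in>A. f y \<le> f x" using x1 assms by auto
  have "sum f A \<le> sum (\<lambda>_. f x) A" by (rule sum_mono) (use x in auto)
  then show ?thesis using x by auto
qed



lemma core_G:
  assumes X: "finite X" "card X \<le> n" and n1: "n \<ge> 1" and b: "\<beta> > 0"
    and F: "F \<subseteq> {g. g \<subseteq> X \<and> card g = Suc k}"
    and cF: "\<beta> * real n ^ Suc k \<le> real (card F)"
  shows "\<beta> / 2 * real n ^ k \<le> real (card {g. g \<subseteq> X \<and> card g = k \<and>
            \<beta> * real n / 2 \<le> real (card {x \<in> X - g. insert x g \<in> F})})"
proof -
  define K where "K = {g. g \<subseteq> X \<and> card g = k}"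
  define d where "d g = {x \<in> X - g. insert x g \<in> F}" for g
  define G where "G = {g \<in> K. \<beta> * real n / 2 \<le> real (card (d g))}"
  have finK: "finite K" unfolding K_def using finite_ksets[OF X(1)] .
  have cK: "card K \<le> n ^ k" unfolding K_def using card_ksets_le[OF X] .
  have fd: "finite (d g)" for g unfolding d_def using X(1) by auto
  have "F \<subseteq> (\<lambda>(g,x). insert x g) ` (SIGMA g:K. d g)"
  proof
    fix e assume e: "e \<in> F"
    then have ce: "card e = Suc k" "e \<subseteq> X" using F by auto
    then obtain x where x: "x \<in> e" by (metis card.empty ex_in_conv nat.distinct(1))
    have fe: "finite e" using ce X(1) finite_subset by blast
    have "e - {x} \<in> K" unfolding K_def using ce x fe by auto
    moreover have "x \<in> d (e - {x})" unfolding d_def using x ce e by (auto simp: insert_absorb)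
    moreover have "e = insert x (e - {x})" using x by auto
    ultimately show "e \<in> (\<lambda>(g,x). insert x g) ` (SIGMA g:K. d g)"
      by (intro image_eqI[where x="(e - {x}, x)"]) auto
  qed
  moreover have fS: "finite (SIGMA g:K. d g)" using finK fd by auto
  ultimately have "card F \<le> card ((\<lambda>(g,x). insert x g) ` (SIGMA g:K. d g))"
    by (intro card_mono) auto
  also have "\<dots> \<le> card (SIGMA g:K. d g)" using fS by (rule card_image_le)
  also have "\<dots> = (\<Sum>g\<in>K. card (d g))" by (rule card_SigmaI) (use finK fd in auto)
  finally have cc: "card F \<le> (\<Sum>g\<in>K. card (d g))" .
  have c1: "real (card F) \<le> (\<Sum>g\<in>K. real (card (d g)))"
    using of_nat_mono[OF cc, where 'a=real] by simp
  have GK: "G \<subseteq> K" unfolding G_def by auto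
  have "(\<Sum>g\<in>K. real (card (d g))) = (\<Sum>g\<in>G. real (card (d g))) + (\<Sum>g\<in>K-G. real (card (d g)))"
    using sum.subset_diff[OF GK finK, of "\<lambda>g. real (card (d g))"] by simp
  also have "(\<Sum>g\<in>G. real (card (d g))) \<le> (\<Sum>g\<in>G. real n)"
  proof (rule sum_mono)
    fix g assume "g \<in> G"
    have "d g \<subseteq> X" unfolding d_def by auto
    then have "card (d g) \<le> n" using X card_mono by (meson le_trans)
    then show "real (card (d g)) \<le> real n" by simp
  qed
  also have "(\<Sum>g\<in>K-G. real (card (d g))) \<le> (\<Sum>g\<in>K-G. \<beta> * real n / 2)"
    by (rule sum_mono) (auto simp: G_def)
  finally have "real (card F) \<le> real (card G) * real n + real (card (K - G)) * (\<beta> * real n / 2)"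
    using c1 by simp
  also have "real (card (K - G)) * (\<beta> * real n / 2) \<le> real n ^ k * (\<beta> * real n / 2)"
  proof (rule mult_right_mono)
    have "card (K - G) \<le> card K" by (rule card_mono[OF finK]) auto
    then have "card (K - G) \<le> n ^ k" using cK by linarith
    then show "real (card (K - G)) \<le> real n ^ k" by (metis of_nat_le_iff of_nat_power)
  qed (use b in auto)
  finally have "\<beta> * real n ^ Suc k \<le> real (card G) * real n + real n ^ k * (\<beta> * real n / 2)"
    using cF by linarith
  then have "(\<beta> / 2 * real n ^ k) * real n \<le> real (card G) * real n"
    by (simp add: algebra_simps)
  then have "\<beta> / 2 * real n ^ k \<le> real (card G)" using n1 by simp
  then show ?thesis unfolding G_def K_def d_def by (simp add: conj_assoc)
qed



lemma core_greedy:
  fixes d :: "'b \<Rightarrow> 'a set"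
  assumes X: "finite X" "card X \<le> n" and n1: "n \<ge> 1" and b: "\<beta> > 0"
    and fG: "finite G" and dX: "\<And>g. g \<in> G \<Longrightarrow> d g \<subseteq> X"
    and dG: "\<And>g. g \<in> G \<Longrightarrow> \<beta> * real n / 2 \<le> real (card (d g))"
    and j0: "real j0 \<le> \<beta> * real n / 4" and G0: "card G > 0"
  shows "j \<le> j0 \<Longrightarrow> \<exists>T. T \<subseteq> X \<and> card T = j \<and>
            (\<beta>/4) ^ j * real (card G) \<le> real (card {g\<in>G. T \<subseteq> d g})"
proof (induction j)
  case 0
  then show ?case by (intro exI[of _ "{}"]) auto
next
  case (Suc j)
  then obtain T where T: "T \<subseteq> X" "card T = j"
     "(\<beta>/4) ^ j * real (card G) \<le> real (card {g\<in>G. T \<subseteq> d g})" by auto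
  define GT where "GT = {g\<in>G. T \<subseteq> d g}"
  define A where "A = X - T"
  have fA: "finite A" using X A_def by auto
  have fGT: "finite GT" using fG GT_def by auto
  have pos: "(\<beta>/4) ^ j * real (card G) > 0" using b G0 by auto
  have GT0: "real (card GT) > 0" using T(3) pos unfolding GT_def[symmetric] by linarith
  have "(\<Sum>x\<in>A. card {g\<in>GT. x \<in> d g}) = (\<Sum>g\<in>GT. card {x\<in>A. x \<in> d g})"
    by (rule double_count[OF fA fGT])
  then have "real (\<Sum>x\<in>A. card {g\<in>GT. x \<in> d g}) = real (\<Sum>g\<in>GT. card {x\<in>A. x \<in> d g})"
    by (rule arg_cong)
  then have eq: "(\<Sum>x\<in>A. real (card {g\<in>GT. x \<in> d g})) = (\<Sum>g\<in>GT. real (card {x\<in>A. x \<in> d g}))"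
    by (simp only: of_nat_sum)
  have "(\<Sum>g\<in>GT. \<beta> * real n / 4) \<le> (\<Sum>g\<in>GT. real (card {x\<in>A. x \<in> d g}))"
  proof (rule sum_mono)
    fix g assume g: "g \<in> GT"
    then have gG: "g \<in> G" unfolding GT_def by auto
    have "{x\<in>A. x \<in> d g} = d g - T" unfolding A_def using dX[OF gG] by auto
    moreover have "card (d g) \<le> card (d g - T) + card T"
    proof -
      have "finite ((d g - T) \<union> T)" using dX[OF gG] T(1) X(1) finite_subset by auto
      then have "card (d g) \<le> card ((d g - T) \<union> T)" by (rule card_mono) auto
      also have "\<dots> \<le> card (d g - T) + card T" by (rule card_Un_le)
      finally show ?thesis .
    qed
    ultimately have "real (card (d g)) \<le> real (card {x\<in>A. x \<in> d g}) + real j"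
      using T(2) by simp
    moreover have "real j \<le> \<beta> * real n / 4" using Suc.prems j0 by simp
    ultimately show "\<beta> * real n / 4 \<le> real (card {x\<in>A. x \<in> d g})"
      using dG[OF gG] by linarith
  qed
  then have S1: "real (card GT) * (\<beta> * real n / 4) \<le> (\<Sum>x\<in>A. real (card {g\<in>GT. x \<in> d g}))"
    using eq by simp
  have "real (card GT) * (\<beta> * real n / 4) > 0" using GT0 b n1 by auto
  then have "A \<noteq> {}" using S1 by auto
  then obtain x where x: "x \<in> A"
    "(\<Sum>x\<in>A. real (card {g\<in>GT. x \<in> d g})) \<le> real (card A) * real (card {g\<in>GT. x \<in> d g})"
    using exists_ge_avg[OF fA] by blast
  have "card A \<le> card X" unfolding A_def using X(1) by (intro card_mono) auto
  then have "card A \<le> n" using X(2) by linarith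
  then have "real (card A) * real (card {g\<in>GT. x \<in> d g}) \<le> real n * real (card {g\<in>GT. x \<in> d g})"
    by (intro mult_right_mono) auto
  then have "real (card GT) * (\<beta> / 4) * real n \<le> real (card {g\<in>GT. x \<in> d g}) * real n"
    using S1 x(2) by (simp add: algebra_simps)
  then have c: "real (card GT) * (\<beta> / 4) \<le> real (card {g\<in>GT. x \<in> d g})" using n1 by simp
  have "{g\<in>GT. x \<in> d g} = {g\<in>G. insert x T \<subseteq> d g}" unfolding GT_def by auto
  moreover have "(\<beta>/4) ^ Suc j * real (card G) \<le> real (card GT) * (\<beta> / 4)"
    using T(3) b unfolding GT_def by (simp add: algebra_simps mult_right_mono)
  moreover have "insert x T \<subseteq> X" "card (insert x T) = Suc j"
    using x(1) T A_def finite_subset[OF T(1) X(1)] by auto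
  ultimately show ?case using c by (intro exI[of _ "insert x T"]) auto
qed



lemma core:
  fixes t :: "nat \<Rightarrow> nat"
  shows "\<forall>\<beta>>0. \<exists>N. \<forall>n\<ge>N. \<forall>(X::'a set) F. finite X \<longrightarrow> card X \<le> n \<longrightarrow>
     F \<subseteq> {g. g \<subseteq> X \<and> card g = k} \<longrightarrow> \<beta> * real n ^ k \<le> real (card F) \<longrightarrow>
     (\<exists>W. (\<forall>i\<in>{1..k}. W i \<subseteq> X \<and> card (W i) = t i) \<and>
          (\<forall>i\<in>{1..k}. \<forall>j\<in>{1..k}. i \<noteq> j \<longrightarrow> W i \<inter> W j = {}) \<and>
          (\<forall>f. (\<forall>i\<in>{1..k}. f i \<in> W i) \<longrightarrow> f ` {1..k} \<in> F))"
proof (induction k)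
  case 0
  show ?case
  proof (intro allI impI exI[of _ 0])
    fix \<beta> :: real and n :: nat and X :: "'a set" and F
    assume b: "\<beta> > 0" and X: "finite X" and F: "F \<subseteq> {g. g \<subseteq> X \<and> card g = 0}"
      and c: "\<beta> * real n ^ 0 \<le> real (card F)"
    then have "card F \<noteq> 0" by auto
    then have "F \<noteq> {}" by auto
    then obtain e where e: "e \<in> F" by blast
    have "e \<subseteq> X" "card e = 0" using e F by auto
    then have "e = {}" using finite_subset[OF \<open>e \<subseteq> X\<close> X] by simp
    then show "\<exists>W. (\<forall>i\<in>{1..0}. W i \<subseteq> X \<and> card (W i) = t i) \<and>
          (\<forall>i\<in>{1..0}. \<forall>j\<in>{1..0}. i \<noteq> j \<longrightarrow> W i \<inter> W j = {}) \<and>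
          (\<forall>f. (\<forall>i\<in>{1..0::nat}. f i \<in> W i) \<longrightarrow> f ` {1..0} \<in> F)"
      using e by auto
  qed
next
  case (Suc k)
  show ?case
  proof (intro allI impI)
    fix \<beta> :: real assume b: "\<beta> > 0"
    define \<beta>' where "\<beta>' = (\<beta>/4) ^ t (Suc k) * (\<beta> / 2)"
    have b': "\<beta>' > 0" using b unfolding \<beta>'_def by auto
    obtain N' where N': "\<forall>n\<ge>N'. \<forall>(X::'a set) F. finite X \<longrightarrow> card X \<le> n \<longrightarrow>
     F \<subseteq> {g. g \<subseteq> X \<and> card g = k} \<longrightarrow> \<beta>' * real n ^ k \<le> real (card F) \<longrightarrow>
     (\<exists>W. (\<forall>i\<in>{1..k}. W i \<subseteq> X \<and> card (W i) = t i) \<and>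
          (\<forall>i\<in>{1..k}. \<forall>j\<in>{1..k}. i \<noteq> j \<longrightarrow> W i \<inter> W j = {}) \<and>
          (\<forall>f. (\<forall>i\<in>{1..k}. f i \<in> W i) \<longrightarrow> f ` {1..k} \<in> F))"
      using Suc.IH[rule_format, OF b'] by (rule exE)
    define N where "N = max (max N' 1) (nat \<lceil>4 * real (t (Suc k)) / \<beta>\<rceil>)"
    show "\<exists>N. \<forall>n\<ge>N. \<forall>(X::'a set) F. finite X \<longrightarrow> card X \<le> n \<longrightarrow>
     F \<subseteq> {g. g \<subseteq> X \<and> card g = Suc k} \<longrightarrow> \<beta> * real n ^ Suc k \<le> real (card F) \<longrightarrow>
     (\<exists>W. (\<forall>i\<in>{1..Suc k}. W i \<subseteq> X \<and> card (W i) = t i) \<and>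
          (\<forall>i\<in>{1..Suc k}. \<forall>j\<in>{1..Suc k}. i \<noteq> j \<longrightarrow> W i \<inter> W j = {}) \<and>
          (\<forall>f. (\<forall>i\<in>{1..Suc k}. f i \<in> W i) \<longrightarrow> f ` {1..Suc k} \<in> F))"
    proof (intro exI[of _ N] allI impI)
      fix n :: nat and X :: "'a set" and F
      assume n: "n \<ge> N" and X: "finite X" "card X \<le> n"
        and F: "F \<subseteq> {g. g \<subseteq> X \<and> card g = Suc k}" and cF: "\<beta> * real n ^ Suc k \<le> real (card F)"
      have n1: "n \<ge> 1" "n \<ge> N'" using n unfolding N_def by auto
      have "real (nat \<lceil>4 * real (t (Suc k)) / \<beta>\<rceil>) \<le> real n" using n unfolding N_def by simp
      then have "4 * real (t (Suc k)) / \<beta> \<le> real n" by linarith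
      then have j0: "real (t (Suc k)) \<le> \<beta> * real n / 4" using b by (simp add: field_simps)
      define d where "d g = {x \<in> X - g. insert x g \<in> F}" for g
      define G where "G = {g. g \<subseteq> X \<and> card g = k \<and> \<beta> * real n / 2 \<le> real (card (d g))}"
      have cG: "\<beta> / 2 * real n ^ k \<le> real (card G)"
        using core_G[OF X n1(1) b F cF] unfolding G_def d_def .
      have fG: "finite G" unfolding G_def
        by (rule finite_subset[of _ "Pow X"]) (use X in auto)
      have G0: "card G > 0"
      proof -
        have "\<beta> / 2 * real n ^ k > 0" using b n1 by auto
        then show ?thesis using cG by linarith
      qed
      obtain T where T: "T \<subseteq> X" "card T = t (Suc k)"
        "(\<beta>/4) ^ t (Suc k) * real (card G) \<le> real (card {g\<in>G. T \<subseteq> d g})"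
        using core_greedy[OF X n1(1) b fG _ _ j0 G0, of d "t (Suc k)"] unfolding G_def d_def
        by auto
      define F' where "F' = {g\<in>G. T \<subseteq> d g}"
      have F'sub: "F' \<subseteq> {g. g \<subseteq> X - T \<and> card g = k}"
        unfolding F'_def G_def d_def by auto
      have cF': "\<beta>' * real n ^ k \<le> real (card F')"
      proof -
        have "\<beta>' * real n ^ k = (\<beta>/4) ^ t (Suc k) * (\<beta> / 2 * real n ^ k)"
          unfolding \<beta>'_def by simp
        also have "\<dots> \<le> (\<beta>/4) ^ t (Suc k) * real (card G)"
          using cG b by (intro mult_left_mono) auto
        finally show ?thesis using T(3) unfolding F'_def by linarith
      qed
      have cXT: "card (X - T) \<le> n" using X card_mono[of X "X - T"] by auto
      obtain W' where W':
          "\<forall>i\<in>{1..k}. W' i \<subseteq> X - T \<and> card (W' i) = t i"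
          "\<forall>i\<in>{1..k}. \<forall>j\<in>{1..k}. i \<noteq> j \<longrightarrow> W' i \<inter> W' j = {}"
          "\<forall>f. (\<forall>i\<in>{1..k}. f i \<in> W' i) \<longrightarrow> f ` {1..k} \<in> F'"
        using N'[rule_format, OF n1(2) finite_Diff[OF X(1)] cXT F'sub cF'] by blast
      define W where "W = W'(Suc k := T)"
      show "\<exists>W. (\<forall>i\<in>{1..Suc k}. W i \<subseteq> X \<and> card (W i) = t i) \<and>
          (\<forall>i\<in>{1..Suc k}. \<forall>j\<in>{1..Suc k}. i \<noteq> j \<longrightarrow> W i \<inter> W j = {}) \<and>
          (\<forall>f. (\<forall>i\<in>{1..Suc k}. f i \<in> W i) \<longrightarrow> f ` {1..Suc k} \<in> F)"
      proof (intro exI[of _ W] conjI ballI allI impI)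
        fix i assume i: "i \<in> {1..Suc k}"
        show "W i \<subseteq> X" "card (W i) = t i"
          using W'(1) T i unfolding W_def by (cases "i = Suc k"; auto)+
      next
        fix i j assume i: "i \<in> {1..Suc k}" and j: "j \<in> {1..Suc k}" and ij: "i \<noteq> j"
        show "W i \<inter> W j = {}"
        proof (cases "i = Suc k")
          case True
          then have "j \<in> {1..k}" using j ij by auto
          then show ?thesis using True W'(1) ij unfolding W_def by auto
        next
          case False
          then have i': "i \<in> {1..k}" using i by auto
          show ?thesis
          proof (cases "j = Suc k")
            case True
            then show ?thesis using i' W'(1) ij unfolding W_def by auto
          next
            case False
            then have "j \<in> {1..k}" using j by auto
            then show ?thesis using i' W'(2) ij \<open>i \<noteq> Suc k\<close> False unfolding W_def by auto
          qed
        qed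
      next
        fix f assume f: "\<forall>i\<in>{1..Suc k}. f i \<in> W i"
        have "\<forall>i\<in>{1..k}. f i \<in> W' i"
        proof
          fix i assume "i \<in> {1..k}"
          then have "i \<in> {1..Suc k}" "i \<noteq> Suc k" by auto
          then show "f i \<in> W' i" using f[rule_format, of i] unfolding W_def by simp
        qed
        then have g: "f ` {1..k} \<in> F'" using W'(3) by blast
        have "f (Suc k) \<in> T" using f[rule_format, of "Suc k"] unfolding W_def by simp
        then have "f (Suc k) \<in> d (f ` {1..k})" using g unfolding F'_def by auto
        then have "insert (f (Suc k)) (f ` {1..k}) \<in> F" unfolding d_def by auto
        moreover have "f ` {1..Suc k} = insert (f (Suc k)) (f ` {1..k})"
          by (simp add: atLeastAtMostSuc_conv)
        ultimately show "f ` {1..Suc k} \<in> F" by simp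
      qed
    qed
  qed
qed



definition pz :: "real \<Rightarrow> nat \<Rightarrow> nat" where "pz \<alpha> s1 = nat \<lceil>4 * real s1 / \<alpha>\<rceil>"
definition bet :: "real \<Rightarrow> nat \<Rightarrow> real" where
  "bet \<alpha> s1 = \<alpha> / (4 * real (max 1 (pz \<alpha> s1 choose s1)))"

lemma nat_ceil_lt: assumes "(0::real) \<le> x" shows "real (nat \<lceil>x\<rceil>) < x + 1"
proof -
  have "0 \<le> \<lceil>x\<rceil>" using assms by simp
  then have "real (nat \<lceil>x\<rceil>) = real_of_int \<lceil>x\<rceil>" by simp
  then show ?thesis using ceiling_correct[of x] by linarith
qed

locale SB =
  fixes r :: nat and s :: "nat \<Rightarrow> nat" and \<alpha> :: real and H :: "nat set set"
    and V1 V2 :: "nat set" and n m :: nat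
  assumes r2: "r \<ge> 2" and s1: "s 1 \<ge> 2" and smono: "\<forall>i\<in>{1..<r}. s i \<le> s (Suc i)"
    and a: "\<alpha> > 0" and sb: "semibipartite r H V1 V2" and cV1: "card V1 = m" and cV2: "card V2 = n"
    and mb: "real m \<le> \<alpha> * real n / (8 * (real (\<Sum>i=1..r. s i) - real (s 1)))"
    and deg: "\<forall>v\<in>V1. real (hdeg H v) \<ge> \<alpha> * real n ^ (r - 1)"
    and n1: "n \<ge> 1"
begin

definition KU :: "nat set \<Rightarrow> nat set set" where "KU U = {g. g \<subseteq> V2 - U \<and> card g = r - 1}"
definition Lr :: "nat set \<Rightarrow> nat \<Rightarrow> nat set set" where "Lr U v = {g \<in> KU U. insert v g \<in> H}"
definition CL :: "nat set \<Rightarrow> nat set \<Rightarrow> nat set set" where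
  "CL U S = {g \<in> KU U. \<forall>v\<in>S. insert v g \<in> H}"
definition LL :: "nat set" where
  "LL = {v \<in> V1. real (hdeg H v) \<ge> real (n choose (r - 1)) - \<alpha> * real n ^ (r - 1) / (2 * real (s 1))}"

lemma fin: "finite V1" "finite V2" "V1 \<inter> V2 = {}"
  using sb unfolding semibipartite_def by auto

lemma finKU: "finite (KU U)"
  unfolding KU_def by (rule finite_subset[of _ "Pow V2"]) (use fin in auto)

lemma cardKU: "card (KU U) \<le> n ^ (r - 1)"
proof -
  have "card (V2 - U) \<le> n" using fin cV2 by (metis card_mono Diff_subset)
  then show ?thesis unfolding KU_def using card_ksets_le[of "V2 - U" n "r - 1"] fin by auto
qed

lemma cardKU0: "card (KU {}) = n choose (r - 1)"
  unfolding KU_def using n_subsets[OF fin(2), of "r - 1"] cV2 by simp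

lemma hdeg_le: assumes v: "v \<in> V1" shows "hdeg H v \<le> card (Lr {} v)"
proof -
  have "inj_on (\<lambda>e. e - {v}) {e \<in> H. v \<in> e}"
    by (rule inj_onI) (metis (no_types, lifting) insert_Diff mem_Collect_eq)
  moreover have "(\<lambda>e. e - {v}) ` {e \<in> H. v \<in> e} \<subseteq> Lr {} v"
  proof
    fix g assume "g \<in> (\<lambda>e. e - {v}) ` {e \<in> H. v \<in> e}"
    then obtain e where e: "e \<in> H" "v \<in> e" "g = e - {v}" by auto
    have e2: "e \<subseteq> V1 \<union> V2" "card e = r" "card (e \<inter> V1) = 1"
      using sb e(1) unfolding semibipartite_def by auto
    have fe: "finite e" using e2(2) r2 card.infinite by fastforce
    obtain x where x: "e \<inter> V1 = {x}" using e2(3) card_1_singletonE by blast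
    then have "x = v" using v e(2) by auto
    then have "g \<subseteq> V2" using e2(1) x e(3) by auto
    moreover have "card g = r - 1" using e(2,3) e2(2) fe by auto
    moreover have "insert v g \<in> H" using e by (simp add: insert_absorb)
    ultimately show "g \<in> Lr {} v" unfolding Lr_def KU_def by auto
  qed
  moreover have "finite (Lr {} v)" using finKU[of "{}"] unfolding Lr_def by auto
  ultimately show ?thesis unfolding hdeg_def by (rule card_inj_on_le)
qed

lemma Bu_card: "card {g. g \<subseteq> V2 \<and> card g = r - 1 \<and> u \<in> g} \<le> n ^ (r - 2)"
proof -
  have "inj_on (\<lambda>g. g - {u}) {g. g \<subseteq> V2 \<and> card g = r - 1 \<and> u \<in> g}"
    by (rule inj_onI) (metis (no_types, lifting) insert_Diff mem_Collect_eq)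
  moreover have "(\<lambda>g. g - {u}) ` {g. g \<subseteq> V2 \<and> card g = r - 1 \<and> u \<in> g} \<subseteq> {h. h \<subseteq> V2 \<and> card h = r - 2}"
  proof
    fix h assume "h \<in> (\<lambda>g. g - {u}) ` {g. g \<subseteq> V2 \<and> card g = r - 1 \<and> u \<in> g}"
    then obtain g where g: "g \<subseteq> V2" "card g = r - 1" "u \<in> g" "h = g - {u}" by auto
    have "finite g" using g(1) fin finite_subset by auto
    then show "h \<in> {h. h \<subseteq> V2 \<and> card h = r - 2}" using g by auto
  qed
  moreover have "finite {h. h \<subseteq> V2 \<and> card h = r - 2}" using finite_ksets[OF fin(2)] .
  ultimately have "card {g. g \<subseteq> V2 \<and> card g = r - 1 \<and> u \<in> g} \<le> card {h. h \<subseteq> V2 \<and> card h = r - 2}"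
    by (rule card_inj_on_le)
  also have "\<dots> \<le> n ^ (r - 2)" using card_ksets_le[OF fin(2)] cV2 by auto
  finally show ?thesis .
qed

lemma Lr_lower:
  assumes v: "v \<in> V1" and U: "U \<subseteq> V2" and cU: "real (card U) \<le> \<alpha> * real n / (8 * real (s 1))"
  shows "\<alpha> * real n ^ (r - 1) - \<alpha> * real n ^ (r - 1) / (8 * real (s 1)) \<le> real (card (Lr U v))"
proof -
  define B where "B u = {g. g \<subseteq> V2 \<and> card g = r - 1 \<and> u \<in> g}" for u
  have fU: "finite U" using U fin finite_subset by auto
  have sub: "Lr {} v \<subseteq> Lr U v \<union> (\<Union>u\<in>U. B u)"
    unfolding Lr_def KU_def B_def by auto
  have fB: "finite (\<Union>u\<in>U. B u)" using fU unfolding B_def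
    using finite_ksets[OF fin(2)] by (auto intro: finite_subset[of _ "{g. g \<subseteq> V2 \<and> card g = r - 1}"])
  have fLr: "finite (Lr U v)" using finKU[of U] unfolding Lr_def by auto
  have "card (Lr {} v) \<le> card (Lr U v \<union> (\<Union>u\<in>U. B u))"
    using sub fB fLr by (intro card_mono) auto
  also have "\<dots> \<le> card (Lr U v) + card (\<Union>u\<in>U. B u)" by (rule card_Un_le)
  also have "card (\<Union>u\<in>U. B u) \<le> (\<Sum>u\<in>U. card (B u))" using fU by (rule card_UN_le)
  also have "\<dots> \<le> (\<Sum>u\<in>U. n ^ (r - 2))" by (rule sum_mono) (use Bu_card in \<open>auto simp: B_def\<close>)
  finally have c1: "card (Lr {} v) \<le> card (Lr U v) + card U * n ^ (r - 2)" by simp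
  have "real (card U * n ^ (r - 2)) = real (card U) * real n ^ (r - 2)" by simp
  also have "\<dots> \<le> \<alpha> * real n / (8 * real (s 1)) * real n ^ (r - 2)"
    using cU by (intro mult_right_mono) auto
  also have "\<dots> = \<alpha> * (real n * real n ^ (r - 2)) / (8 * real (s 1))" by simp
  also have "real n * real n ^ (r - 2) = real n ^ (r - 1)"
  proof -
    have "r - 1 = Suc (r - 2)" using r2 by simp
    then show ?thesis by (simp only: power_Suc)
  qed
  finally have c2: "real (card U * n ^ (r - 2)) \<le> \<alpha> * real n ^ (r - 1) / (8 * real (s 1))" .
  have "\<alpha> * real n ^ (r - 1) \<le> real (hdeg H v)" using deg v by auto
  also have "\<dots> \<le> real (card (Lr {} v))" using hdeg_le[OF v] by simp
  also have "\<dots> \<le> real (card (Lr U v) + card U * n ^ (r - 2))" using c1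
    by (rule of_nat_mono)
  also have "\<dots> = real (card (Lr U v)) + real (card U * n ^ (r - 2))" by (rule of_nat_add)
  finally show ?thesis using c2 by linarith
qed

lemma phase2:
  assumes A: "A \<subseteq> LL" "card A = s 1 - 1" and v: "v \<in> V1" and U: "U \<subseteq> V2"
    and cU: "real (card U) \<le> \<alpha> * real n / (8 * real (s 1))"
  shows "\<alpha> * real n ^ (r - 1) / 2 \<le> real (card (CL U (insert v A)))"
proof -
  define M where "M = \<alpha> * real n ^ (r - 1)"
  define S where "S = real (s 1)"
  have S2: "S \<ge> 2" using s1 unfolding S_def by simp
  have M0: "M \<ge> 0" using a unfolding M_def by simp
  have fA: "finite A" using A(2) s1 card.infinite by fastforce
  define D where "D a = KU {} - Lr {} a" for a
  have sub: "Lr U v \<subseteq> CL U (insert v A) \<union> (\<Union>a\<in>A. D a)"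
  proof
    fix g assume g: "g \<in> Lr U v"
    show "g \<in> CL U (insert v A) \<union> (\<Union>a\<in>A. D a)"
    proof (cases "g \<in> CL U (insert v A)")
      case False
      then obtain x where x: "x \<in> insert v A" "insert x g \<notin> H" using g unfolding CL_def Lr_def by auto
      then have "x \<in> A" using g unfolding Lr_def by auto
      moreover have "g \<in> D x" using g x unfolding D_def Lr_def KU_def by auto
      ultimately show ?thesis by auto
    qed auto
  qed
  have fCL: "finite (CL U (insert v A))" using finKU[of U] unfolding CL_def by auto
  have fD: "finite (D a)" for a using finKU[of "{}"] unfolding D_def by auto
  have "card (Lr U v) \<le> card (CL U (insert v A) \<union> (\<Union>a\<in>A. D a))"
    using sub fCL fD fA by (intro card_mono) auto
  also have "\<dots> \<le> card (CL U (insert v A)) + card (\<Union>a\<in>A. D a)" by (rule card_Un_le)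
  also have "card (\<Union>a\<in>A. D a) \<le> (\<Sum>a\<in>A. card (D a))" using fA by (rule card_UN_le)
  finally have c1n: "card (Lr U v) \<le> card (CL U (insert v A)) + (\<Sum>a\<in>A. card (D a))" by simp
  have c1: "real (card (Lr U v)) \<le> real (card (CL U (insert v A))) + (\<Sum>a\<in>A. real (card (D a)))"
    using of_nat_mono[OF c1n, where 'a=real] by simp
  have "(\<Sum>a\<in>A. real (card (D a))) \<le> (\<Sum>a\<in>A. M / (2 * S))"
  proof (rule sum_mono)
    fix a assume aA: "a \<in> A"
    then have aL: "a \<in> LL" using A by auto
    then have aV: "a \<in> V1" unfolding LL_def by auto
    have "Lr {} a \<subseteq> KU {}" unfolding Lr_def by auto
    moreover have "finite (Lr {} a)" using finKU[of "{}"] \<open>Lr {} a \<subseteq> KU {}\<close> finite_subset by auto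
    ultimately have "card (D a) = card (KU {}) - card (Lr {} a)" unfolding D_def
      by (intro card_Diff_subset) auto
    moreover have "card (Lr {} a) \<le> card (KU {})" using \<open>Lr {} a \<subseteq> KU {}\<close> finKU card_mono by blast
    ultimately have "real (card (D a)) = real (card (KU {})) - real (card (Lr {} a))" by simp
    also have "\<dots> \<le> real (n choose (r - 1)) - real (hdeg H a)" using hdeg_le[OF aV] cardKU0 by simp
    also have "\<dots> \<le> M / (2 * S)" using aL unfolding LL_def M_def S_def by auto
    finally show "real (card (D a)) \<le> M / (2 * S)" .
  qed
  also have "\<dots> = (S - 1) * (M / (2 * S))" using A(2) s1 unfolding S_def by (simp add: of_nat_diff)
  finally have c2: "real (card (Lr U v)) \<le> real (card (CL U (insert v A))) + (S - 1) * (M / (2 * S))"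
    using c1 by linarith
  have c3: "M - M / (8 * S) \<le> real (card (Lr U v))"
    using Lr_lower[OF v U cU] unfolding M_def S_def .
  have e1: "(S - 1) * (M / (2 * S)) = M / 2 - M / (2 * S)" using S2 by (simp add: field_simps)
  have e2: "M / (8 * S) \<le> M / (2 * S)" using S2 M0 by (simp add: frac_le)
  show ?thesis using c2 c3 e1 e2 unfolding M_def[symmetric] by linarith
qed

lemma phase1:
  assumes P: "P \<subseteq> V1" "card P = pz \<alpha> (s 1)" and U: "U \<subseteq> V2"
    and cU: "real (card U) \<le> \<alpha> * real n / (8 * real (s 1))"
  shows "\<exists>T\<subseteq>P. card T = s 1 \<and> bet \<alpha> (s 1) * real n ^ (r - 1) \<le> real (card (CL U T))"
proof -
  define p where "p = pz \<alpha> (s 1)"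
  define M where "M = \<alpha> * real n ^ (r - 1)"
  define S where "S = real (s 1)"
  define K where "K = KU U"
  define Dg where "Dg g = {v\<in>P. insert v g \<in> H}" for g
  have S2: "S \<ge> 2" using s1 unfolding S_def by simp
  have M0: "M > 0" using a n1 unfolding M_def by simp
  have pge: "4 * S / \<alpha> \<le> real p" unfolding p_def pz_def S_def by linarith
  then have pge': "4 * S \<le> real p * \<alpha>" using a by (simp add: field_simps)
  have p0: "real p > 0" using pge S2 a by (smt (verit) divide_pos_pos)
  have fP: "finite P" using P(1) fin finite_subset by auto
  have fK: "finite K" unfolding K_def by (rule finKU)
  have cK: "real (card K) \<le> real n ^ (r - 1)" unfolding K_def using cardKU[of U]
    by (metis of_nat_le_iff of_nat_power)
  have "(\<Sum>v\<in>P. card {g\<in>K. insert v g \<in> H}) = (\<Sum>g\<in>K. card {v\<in>P. insert v g \<in> H})"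
    by (rule double_count[OF fP fK])
  then have "(\<Sum>v\<in>P. card (Lr U v)) = (\<Sum>g\<in>K. card (Dg g))"
    unfolding Lr_def K_def Dg_def by simp
  then have eq: "(\<Sum>v\<in>P. real (card (Lr U v))) = (\<Sum>g\<in>K. real (card (Dg g)))"
    by (metis of_nat_sum)
  have "(\<Sum>v\<in>P. M / 2) \<le> (\<Sum>v\<in>P. real (card (Lr U v)))"
  proof (rule sum_mono)
    fix v assume "v \<in> P"
    then have v: "v \<in> V1" using P by auto
    have "M / (8 * S) \<le> M / 2" using S2 M0 by (intro divide_left_mono) auto
    then show "M / 2 \<le> real (card (Lr U v))"
      using Lr_lower[OF v U cU] unfolding M_def[symmetric] S_def[symmetric] by linarith
  qed
  then have low: "real p * (M / 2) \<le> (\<Sum>g\<in>K. real (card (Dg g)))" using eq P(2) p_def by simp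
  define B where "B = {g\<in>K. s 1 \<le> card (Dg g)}"
  have BK: "B \<subseteq> K" unfolding B_def by auto
  have fB: "finite B" using fK BK finite_subset by auto
  have "(\<Sum>g\<in>K. real (card (Dg g))) = (\<Sum>g\<in>B. real (card (Dg g))) + (\<Sum>g\<in>K-B. real (card (Dg g)))"
    using sum.subset_diff[OF BK fK, of "\<lambda>g. real (card (Dg g))"] by simp
  also have "(\<Sum>g\<in>B. real (card (Dg g))) \<le> (\<Sum>g\<in>B. real p)"
  proof (rule sum_mono)
    fix g assume "g \<in> B"
    have "card (Dg g) \<le> card P" unfolding Dg_def using fP by (intro card_mono) auto
    then show "real (card (Dg g)) \<le> real p" using P(2) p_def by simp
  qed
  also have "(\<Sum>g\<in>K-B. real (card (Dg g))) \<le> (\<Sum>g\<in>K-B. S - 1)"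
  proof (rule sum_mono)
    fix g assume "g \<in> K - B"
    then have "card (Dg g) < s 1" unfolding B_def by auto
    then show "real (card (Dg g)) \<le> S - 1" unfolding S_def by linarith
  qed
  finally have "real p * (M / 2) \<le> real (card B) * real p + real (card (K - B)) * (S - 1)"
    using low by simp
  moreover have "real (card (K - B)) * (S - 1) \<le> real n ^ (r - 1) * (S - 1)"
  proof (rule mult_right_mono)
    have "card (K - B) \<le> card K" using fK by (intro card_mono) auto
    then show "real (card (K - B)) \<le> real n ^ (r - 1)" using cK by linarith
  qed (use S2 in auto)
  moreover have "real n ^ (r - 1) * (S - 1) \<le> real p * (M / 4)"
  proof -
    have "real n ^ (r - 1) * (S - 1) \<le> real n ^ (r - 1) * S" by (intro mult_left_mono) auto
    also have "\<dots> \<le> real n ^ (r - 1) * (real p * \<alpha> / 4)" using pge' by (intro mult_left_mono) auto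
    also have "\<dots> = real p * (M / 4)" unfolding M_def by simp
    finally show ?thesis .
  qed
  ultimately have "real p * (M / 4) \<le> real (card B) * real p" by simp
  then have cB: "M / 4 \<le> real (card B)" using p0 by (simp add: mult.commute)
  then have Bne: "B \<noteq> {}" using M0 by auto
  have exS: "\<exists>T. T \<subseteq> Dg g \<and> card T = s 1" if "g \<in> B" for g
  proof -
    have "s 1 \<le> card (Dg g)" using that unfolding B_def by auto
    then obtain T where "T \<subseteq> Dg g" "card T = s 1" by (rule obtain_subset_with_card_n)
    then show ?thesis by blast
  qed
  define Sg where "Sg g = (SOME T. T \<subseteq> Dg g \<and> card T = s 1)" for g
  have Sg: "Sg g \<subseteq> Dg g" "card (Sg g) = s 1" if "g \<in> B" for g
    using someI_ex[OF exS[OF that]] unfolding Sg_def by auto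
  define Sig where "Sig = {T. T \<subseteq> P \<and> card T = s 1}"
  have fSig: "finite Sig" unfolding Sig_def using finite_ksets[OF fP] .
  have cSig: "card Sig = p choose s 1" unfolding Sig_def using n_subsets[OF fP] P(2) p_def by simp
  have SgSig: "Sg g \<in> Sig" if "g \<in> B" for g using Sg[OF that] unfolding Sig_def Dg_def by auto
  have Bun: "B = (\<Union>T\<in>Sig. {g\<in>B. Sg g = T})" using SgSig by auto
  have "card B = (\<Sum>T\<in>Sig. card {g\<in>B. Sg g = T})"
    by (subst Bun, rule card_UN_disjoint) (use fSig fB in auto)
  then have cBs: "real (card B) = (\<Sum>T\<in>Sig. real (card {g\<in>B. Sg g = T}))"
    by (metis of_nat_sum)
  have Signe: "Sig \<noteq> {}" using Bne SgSig by auto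
  obtain T where T: "T \<in> Sig" "(\<Sum>T\<in>Sig. real (card {g\<in>B. Sg g = T})) \<le> real (card Sig) * real (card {g\<in>B. Sg g = T})"
    using exists_ge_avg[OF fSig Signe, of "\<lambda>T. real (card {g\<in>B. Sg g = T})"] by blast
  have cSig1: "real (card Sig) \<le> real (max 1 (p choose s 1))" using cSig by simp
  have mpos: "real (max 1 (p choose s 1)) > 0" by simp
  have "M / 4 \<le> real (max 1 (p choose s 1)) * real (card {g\<in>B. Sg g = T})"
    using cB cBs T(2) mult_right_mono[OF cSig1, of "real (card {g\<in>B. Sg g = T})"] by simp
  then have c4: "M / 4 / real (max 1 (p choose s 1)) \<le> real (card {g\<in>B. Sg g = T})"
    using mpos by (simp add: divide_le_eq algebra_simps)
  have "{g\<in>B. Sg g = T} \<subseteq> CL U T"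
  proof
    fix g assume g: "g \<in> {g\<in>B. Sg g = T}"
    then have "T \<subseteq> Dg g" "g \<in> K" using Sg[of g] BK by auto
    then show "g \<in> CL U T" unfolding CL_def Dg_def K_def by auto
  qed
  then have "card {g\<in>B. Sg g = T} \<le> card (CL U T)"
    using finKU[of U] unfolding CL_def by (intro card_mono) auto
  moreover have "bet \<alpha> (s 1) * real n ^ (r - 1) = M / 4 / real (max 1 (p choose s 1))"
    unfolding bet_def M_def p_def by simp
  ultimately have "bet \<alpha> (s 1) * real n ^ (r - 1) \<le> real (card (CL U T))" using c4 by linarith
  moreover have "T \<subseteq> P" "card T = s 1" using T(1) unfolding Sig_def by auto
  ultimately show ?thesis by blast
qed

lemma embed:
  assumes S: "S \<subseteq> V1" "card S = s 1" and U: "U \<subseteq> V2"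
    and cF: "bet \<alpha> (s 1) * real n ^ (r - 1) \<le> real (card (CL U S))"
    and cor: "\<forall>(X::nat set) F. finite X \<longrightarrow> card X \<le> n \<longrightarrow> F \<subseteq> {g. g \<subseteq> X \<and> card g = r - 1} \<longrightarrow>
       bet \<alpha> (s 1) * real n ^ (r - 1) \<le> real (card F) \<longrightarrow>
       (\<exists>W. (\<forall>i\<in>{1..r - 1}. W i \<subseteq> X \<and> card (W i) = s (Suc i)) \<and>
          (\<forall>i\<in>{1..r - 1}. \<forall>j\<in>{1..r - 1}. i \<noteq> j \<longrightarrow> W i \<inter> W j = {}) \<and>
          (\<forall>f. (\<forall>i\<in>{1..r - 1}. f i \<in> W i) \<longrightarrow> f ` {1..r - 1} \<in> F))"
  shows "\<exists>W. ordered_copy r s H V1 V2 W \<and> W 1 = S \<and> (\<forall>l\<in>{2..r}. W l \<subseteq> V2 - U)"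
proof -
  have fX: "finite (V2 - U)" using fin by auto
  have cX: "card (V2 - U) \<le> n" using fin cV2 by (metis card_mono Diff_subset)
  have Fsub: "CL U S \<subseteq> {g. g \<subseteq> V2 - U \<and> card g = r - 1}" unfolding CL_def KU_def by auto
  obtain W' where W': "\<forall>i\<in>{1..r - 1}. W' i \<subseteq> V2 - U \<and> card (W' i) = s (Suc i)"
     "\<forall>i\<in>{1..r - 1}. \<forall>j\<in>{1..r - 1}. i \<noteq> j \<longrightarrow> W' i \<inter> W' j = {}"
     "\<forall>f. (\<forall>i\<in>{1..r - 1}. f i \<in> W' i) \<longrightarrow> f ` {1..r - 1} \<in> CL U S"
    using cor[rule_format, OF fX cX Fsub cF] by (elim exE conjE) (rule that)
  define W where "W i = (if i = 1 then S else W' (i - 1))" for i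
  have Wi: "i \<in> {2..r} \<Longrightarrow> W i = W' (i - 1) \<and> i - 1 \<in> {1..r - 1}" for i
    unfolding W_def by auto
  have W1: "W 1 = S" unfolding W_def by simp
  have oc: "ordered_copy r s H V1 V2 W"
    unfolding ordered_copy_def
  proof (intro conjI ballI allI impI)
    fix i assume i: "i \<in> {1..r}"
    show "card (W i) = s i"
    proof (cases "i = 1")
      case True then show ?thesis using W1 S by simp
    next
      case False
      then have "i \<in> {2..r}" using i by auto
      then show ?thesis using Wi[of i] W'(1) by auto
    qed
  next
    show "W 1 \<subseteq> V1" using W1 S by simp
  next
    fix i assume "i \<in> {2..r}"
    then show "W i \<subseteq> V2" using Wi[of i] W'(1) by auto
  next
    fix i j assume i: "i \<in> {1..r}" and j: "j \<in> {1..r}" and ij: "i \<noteq> j"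
    show "W i \<inter> W j = {}"
    proof (cases "i = 1")
      case True
      then have "j \<in> {2..r}" using j ij by auto
      then have "W j \<subseteq> V2" using Wi[of j] W'(1) by auto
      then show ?thesis using True W1 S fin(3) by auto
    next
      case False
      then have i2: "i \<in> {2..r}" using i by auto
      show ?thesis
      proof (cases "j = 1")
        case True
        have "W i \<subseteq> V2" using Wi[of i] i2 W'(1) by auto
        then show ?thesis using True W1 S fin(3) by auto
      next
        case False
        then have j2: "j \<in> {2..r}" using j by auto
        have "i - 1 \<noteq> j - 1" using i2 j2 ij by auto
        then show ?thesis using Wi[OF i2] Wi[OF j2] W'(2) by auto
      qed
    qed
  next
    fix f assume f: "\<forall>i\<in>{1..r}. f i \<in> W i"
    define f' where "f' i = f (Suc i)" for i
    have hf': "\<forall>i\<in>{1..r - 1}. f' i \<in> W' i"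
    proof
      fix i assume i: "i \<in> {1..r - 1}"
      then have "Suc i \<in> {2..r}" by auto
      then have "f (Suc i) \<in> W (Suc i)" "W (Suc i) = W' i" using f Wi[of "Suc i"] by auto
      then show "f' i \<in> W' i" unfolding f'_def by simp
    qed
    have g: "f' ` {1..r - 1} \<in> CL U S" by (rule W'(3)[THEN spec, THEN mp, OF hf'])
    have "(1::nat) \<in> {1..r}" using r2 by simp
    then have "f 1 \<in> W 1" using f by blast
    then have "f 1 \<in> S" using W1 by simp
    then have "insert (f 1) (f' ` {1..r - 1}) \<in> H" using g unfolding CL_def by auto
    moreover have "f ` {1..r} = insert (f 1) (f' ` {1..r - 1})"
    proof -
      have "{1..r} = insert 1 (Suc ` {1..r - 1})" using r2
        by (auto simp: image_iff)
      then have "f ` {1..r} = insert (f 1) (f ` Suc ` {1..r - 1})" by simp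
      then show ?thesis unfolding f'_def by (simp only: image_image)
    qed
    ultimately show "f ` {1..r} \<in> H" by simp
  qed
  have "\<forall>l\<in>{2..r}. W l \<subseteq> V2 - U"
  proof
    fix l assume l: "l \<in> {2..r}"
    then have "W l = W' (l - 1)" "l - 1 \<in> {1..r - 1}" using Wi by auto
    then show "W l \<subseteq> V2 - U" using W'(1) by auto
  qed
  then show ?thesis using oc W1 by blast
qed

definition qq :: nat where "qq = m div s 1"
definition DD :: nat where "DD = (\<Sum>i=1..r. s i) - s 1"

lemma DD_props: "DD \<ge> 1" "real DD = real (\<Sum>i=1..r. s i) - real (s 1)"
proof -
  have eq: "(\<Sum>i=1..r. s i) = s 1 + (\<Sum>i=2..r. s i)"
    using sum.atLeast_Suc_atMost[of 1 r s] r2 by (simp add: numeral_2_eq_2)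
  have "s 1 \<le> s 2" using smono r2 by (metis atLeastLessThan_iff le_numeral_extra(4) less_le_trans
      one_less_numeral_iff semiring_norm(76) Suc_1 order.refl)
  moreover have "s 2 \<le> (\<Sum>i=2..r. s i)" using r2 by (intro member_le_sum) auto
  ultimately have "(\<Sum>i=2..r. s i) \<ge> 1" using s1 by linarith
  then show "DD \<ge> 1" "real DD = real (\<Sum>i=1..r. s i) - real (s 1)" unfolding DD_def using eq by auto
qed

lemma Ubound:
  assumes "j < qq" "card U \<le> j * DD"
  shows "real (card U) \<le> \<alpha> * real n / (8 * real (s 1))"
proof -
  have D1: "real DD \<ge> 1" using DD_props by simp
  have S2: "real (s 1) \<ge> 2" using s1 by simp
  have "real m * (8 * real DD) \<le> \<alpha> * real n"
    using mb D1 unfolding DD_props(2)[symmetric] by (simp add: field_simps)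
  have qs: "qq * s 1 \<le> m" unfolding qq_def by simp
  have "card U \<le> qq * DD" using assms by (meson less_imp_le_nat mult_le_mono1 le_trans)
  then have "real (card U) * real (s 1) \<le> real qq * real DD * real (s 1)"
    by (intro mult_right_mono) (simp_all add: of_nat_mult[symmetric] del: of_nat_mult)
  also have "\<dots> = real (qq * s 1) * real DD" by simp
  also have "\<dots> \<le> real m * real DD" by (rule mult_right_mono[OF of_nat_mono[OF qs]]) (use D1 in simp)
  also have "\<dots> \<le> \<alpha> * real n / 8" using \<open>real m * (8 * real DD) \<le> \<alpha> * real n\<close> by simp
  finally show ?thesis using S2 by (simp add: field_simps)
qed

lemma arith_case:
  assumes hL: "min (5 * real (s 1) * (real (s 1) - 1) / \<alpha>) ((real (s 1) - 1) / real (s 1) * real m) \<le> real (card LL)"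
    and LR: "LL \<subseteq> R" and R: "R = V1 - U1" and U1: "U1 \<subseteq> V1" "card U1 \<le> j * s 1" and j: "j < qq"
    and small: "card (R - LL) < pz \<alpha> (s 1)"
  shows "(qq - j) * (s 1 - 1) \<le> card (R \<inter> LL)"
proof -
  define Q where "Q = qq - j"
  have fR: "finite R" using R fin by auto
  have fL: "finite LL" using LR fR finite_subset by auto
  have RL: "R \<inter> LL = LL" using LR by auto
  have cR: "card R = m - card U1" using R U1 cV1 fin by (simp add: card_Diff_subset finite_subset)
  have qs: "qq * s 1 \<le> m" unfolding qq_def by simp
  have QR: "Q * s 1 \<le> card R" unfolding Q_def using cR U1(2) qs j
    by (simp add: diff_mult_distrib) 
  have cRs: "card R = card (R - LL) + card LL" using LR fR fL by (metis card_Diff_subset card_mono le_add_diff_inverse2)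
  have S2: "real (s 1) \<ge> 2" using s1 by simp
  have "real (card LL) \<ge> 5 * real (s 1) * (real (s 1) - 1) / \<alpha> \<or>
        real (card LL) \<ge> (real (s 1) - 1) / real (s 1) * real m" using hL by linarith
  then have "Q * (s 1 - 1) \<le> card LL"
  proof
    assume h: "real (card LL) \<ge> 5 * real (s 1) * (real (s 1) - 1) / \<alpha>"
    show ?thesis
    proof (cases "Q < pz \<alpha> (s 1)")
      case True
      have p: "real (pz \<alpha> (s 1)) < 4 * real (s 1) / \<alpha> + 1" unfolding pz_def
        by (rule nat_ceil_lt) (use a in simp)
      have "real Q \<le> real (pz \<alpha> (s 1)) - 1" using True by linarith
      then have Qb: "real Q \<le> 4 * real (s 1) / \<alpha>" using p by linarith
      have "real (Q * (s 1 - 1)) = real Q * (real (s 1) - 1)" using s1 by (simp add: of_nat_diff)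
      also have "\<dots> \<le> 4 * real (s 1) / \<alpha> * (real (s 1) - 1)" using Qb S2 by (intro mult_right_mono) auto
      also have "\<dots> \<le> 5 * real (s 1) * (real (s 1) - 1) / \<alpha>" using a S2 by (simp add: field_simps)
      finally show ?thesis using h by linarith
    next
      case False
      then have "card (R - LL) < Q" using small by linarith
      then have "Q * s 1 < Q + card LL" using QR cRs by linarith
      moreover have "Q * s 1 = Q * (s 1 - 1) + Q" using s1 by (simp add: diff_mult_distrib2)
      ultimately show ?thesis by linarith
    qed
  next
    assume h: "real (card LL) \<ge> (real (s 1) - 1) / real (s 1) * real m"
    have Qm: "Q * s 1 \<le> m" using qs unfolding Q_def by (meson diff_le_self mult_le_mono1 le_trans)
    have "real (Q * (s 1 - 1)) = real (Q * s 1) * (real (s 1) - 1) / real (s 1)" using s1 S2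
      by (simp add: of_nat_diff field_simps)
    also have "\<dots> \<le> real m * (real (s 1) - 1) / real (s 1)"
      using of_nat_mono[OF Qm, where 'a=real] S2 by (intro divide_right_mono mult_right_mono) auto
    also have "\<dots> = (real (s 1) - 1) / real (s 1) * real m" by simp
    finally have "real (Q * (s 1 - 1)) \<le> real (card LL)" using h by linarith
    then show ?thesis by (simp only: of_nat_le_iff)
  qed
  then show ?thesis using RL unfolding Q_def by simp
qed

lemma step:
  assumes cor: "\<forall>(X::nat set) F. finite X \<longrightarrow> card X \<le> n \<longrightarrow> F \<subseteq> {g. g \<subseteq> X \<and> card g = r - 1} \<longrightarrow>
       bet \<alpha> (s 1) * real n ^ (r - 1) \<le> real (card F) \<longrightarrow>
       (\<exists>W. (\<forall>i\<in>{1..r - 1}. W i \<subseteq> X \<and> card (W i) = s (Suc i)) \<and>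
          (\<forall>i\<in>{1..r - 1}. \<forall>j\<in>{1..r - 1}. i \<noteq> j \<longrightarrow> W i \<inter> W j = {}) \<and>
          (\<forall>f. (\<forall>i\<in>{1..r - 1}. f i \<in> W i) \<longrightarrow> f ` {1..r - 1} \<in> F))" and hL: "min (5 * real (s 1) * (real (s 1) - 1) / \<alpha>) ((real (s 1) - 1) / real (s 1) * real m) \<le> real (card LL)"
    and j: "j < qq" and U1: "U1 \<subseteq> V1" "card U1 \<le> j * s 1" and U2: "U2 \<subseteq> V2" "card U2 \<le> j * DD"
    and inv: "LL \<subseteq> V1 - U1 \<or> (qq - j) * (s 1 - 1) \<le> card ((V1 - U1) \<inter> LL)"
  shows "\<exists>W. ordered_copy r s H V1 V2 W \<and> W 1 \<subseteq> V1 - U1 \<and> (\<forall>l\<in>{2..r}. W l \<subseteq> V2 - U2) \<and>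
     (LL \<subseteq> V1 - (U1 \<union> W 1) \<or> (qq - Suc j) * (s 1 - 1) \<le> card ((V1 - (U1 \<union> W 1)) \<inter> LL))"
proof -
  define R where "R = V1 - U1"
  have cU: "real (card U2) \<le> \<alpha> * real n / (8 * real (s 1))" using Ubound[OF j U2(2)] .
  have fR: "finite R" using R_def fin by auto
  have cR0: "card R = m - card U1" using R_def U1 cV1 fin by (simp add: card_Diff_subset finite_subset)
  have qs: "qq * s 1 \<le> m" unfolding qq_def by simp
  have cR: "(qq - j) * s 1 \<le> card R" using cR0 U1(2) qs j by (simp add: diff_mult_distrib)
  have qj: "qq - j \<ge> 1" using j by simp
  have grp: "\<exists>S. S \<subseteq> R \<and> card S = s 1 \<and> bet \<alpha> (s 1) * real n ^ (r - 1) \<le> real (card (CL U2 S)) \<and>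
     (LL \<subseteq> R - S \<or> (qq - Suc j) * (s 1 - 1) \<le> card ((R - S) \<inter> LL))"
  proof (cases "LL \<subseteq> R \<and> pz \<alpha> (s 1) \<le> card (R - LL)")
    case True
    then obtain P where P: "P \<subseteq> R - LL" "card P = pz \<alpha> (s 1)"
      by (meson obtain_subset_with_card_n)
    have PV: "P \<subseteq> V1" using P R_def by auto
    obtain T where T: "T \<subseteq> P" "card T = s 1" "bet \<alpha> (s 1) * real n ^ (r - 1) \<le> real (card (CL U2 T))"
      using phase1[OF PV P(2) U2(1) cU] by blast
    have "LL \<subseteq> R - T" using True T(1) P(1) by auto
    moreover have "T \<subseteq> R" using T(1) P(1) by auto
    ultimately show ?thesis using T by blast
  next
    case False
    have h2: "(qq - j) * (s 1 - 1) \<le> card (R \<inter> LL)"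
    proof (cases "LL \<subseteq> R")
      case True
      then have "card (R - LL) < pz \<alpha> (s 1)" using False by auto
      then show ?thesis using arith_case[OF hL True R_def U1 j] by blast
    next
      case False then show ?thesis using inv R_def by auto
    qed
    have "s 1 - 1 \<le> (qq - j) * (s 1 - 1)" using qj by simp
    then have "s 1 - 1 \<le> card (R \<inter> LL)" using h2 by linarith
    then obtain A where A: "A \<subseteq> R \<inter> LL" "card A = s 1 - 1" "finite A"
      by (rule obtain_subset_with_card_n)
    have sR: "s 1 \<le> card R" using cR qj by (metis le_trans mult_1 mult_le_mono1)
    have bnd: "bet \<alpha> (s 1) * real n ^ (r - 1) \<le> \<alpha> * real n ^ (r - 1) / 2"
    proof -
      have "bet \<alpha> (s 1) \<le> \<alpha> / 4" unfolding bet_def using a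
        by (intro divide_left_mono) auto
      then have "bet \<alpha> (s 1) * real n ^ (r - 1) \<le> \<alpha> / 4 * real n ^ (r - 1)"
        by (intro mult_right_mono) auto
      also have "\<dots> \<le> \<alpha> * real n ^ (r - 1) / 2" using a by simp
      finally show ?thesis .
    qed
    have AL: "A \<subseteq> LL" using A by auto
    show ?thesis
    proof (cases "R - LL = {}")
      case False
      then obtain v where v: "v \<in> R - LL" by auto
      have vA: "v \<notin> A" using v A by auto
      have vV: "v \<in> V1" using v R_def by auto
      have cS: "card (insert v A) = s 1" using A vA s1 by simp
      have c1: "bet \<alpha> (s 1) * real n ^ (r - 1) \<le> real (card (CL U2 (insert v A)))"
        using phase2[OF AL A(2) vV U2(1) cU] bnd by linarith
      have eq: "(R - insert v A) \<inter> LL = (R \<inter> LL) - A" using v by auto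
      have "card ((R - insert v A) \<inter> LL) = card (R \<inter> LL) - (s 1 - 1)"
        unfolding eq using A by (simp add: card_Diff_subset)
      moreover have "(qq - Suc j) * (s 1 - 1) = (qq - j) * (s 1 - 1) - (s 1 - 1)"
        by (simp add: diff_mult_distrib)
      ultimately have "(qq - Suc j) * (s 1 - 1) \<le> card ((R - insert v A) \<inter> LL)" using h2 by linarith
      moreover have "insert v A \<subseteq> R" using v A by auto
      ultimately show ?thesis using cS c1 by blast
    next
      case True
      then have RL: "R \<subseteq> LL" by auto
      have "card A < card R" using A(2) sR s1 by linarith
      have "R - A \<noteq> {}"
      proof
        assume "R - A = {}"
        then have "R \<subseteq> A" by auto
        then have "card R \<le> card A" by (rule card_mono[OF A(3)])
        then show False using \<open>card A < card R\<close> by linarith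
      qed
      then obtain v where v: "v \<in> R - A" by auto
      have vA: "v \<notin> A" using v by auto
      have vV: "v \<in> V1" using v R_def by auto
      have cS: "card (insert v A) = s 1" using A vA s1 by simp
      have c1: "bet \<alpha> (s 1) * real n ^ (r - 1) \<le> real (card (CL U2 (insert v A)))"
        using phase2[OF AL A(2) vV U2(1) cU] bnd by linarith
      have sub: "insert v A \<subseteq> R" using v A by auto
      have eq: "(R - insert v A) \<inter> LL = R - insert v A" using RL by auto
      have "card ((R - insert v A) \<inter> LL) = card R - s 1"
        unfolding eq using card_Diff_subset[OF finite_subset[OF sub fR] sub] cS by simp
      moreover have "(qq - Suc j) * (s 1 - 1) \<le> (qq - Suc j) * s 1" by simp
      moreover have "(qq - Suc j) * s 1 = (qq - j) * s 1 - s 1" by (simp add: diff_mult_distrib)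
      ultimately have "(qq - Suc j) * (s 1 - 1) \<le> card ((R - insert v A) \<inter> LL)" using cR by linarith
      then show ?thesis using cS c1 sub by blast
    qed
  qed
  then obtain S where S: "S \<subseteq> R" "card S = s 1" "bet \<alpha> (s 1) * real n ^ (r - 1) \<le> real (card (CL U2 S))"
     "LL \<subseteq> R - S \<or> (qq - Suc j) * (s 1 - 1) \<le> card ((R - S) \<inter> LL)" by blast
  have SV: "S \<subseteq> V1" using S(1) R_def by auto
  obtain W where W: "ordered_copy r s H V1 V2 W" "W 1 = S" "\<forall>l\<in>{2..r}. W l \<subseteq> V2 - U2"
    using embed[OF SV S(2) U2(1) S(3) cor] by blast
  have "V1 - (U1 \<union> W 1) = R - S" using W(2) R_def by auto
  then show ?thesis using W S R_def by auto
qed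

lemma DD_eq: "DD = (\<Sum>i=2..r. s i)"
proof -
  have eq: "(\<Sum>i=1..r. s i) = s 1 + (\<Sum>i=2..r. s i)"
    using sum.atLeast_Suc_atMost[of 1 r s] r2 by (simp add: numeral_2_eq_2)
  then show ?thesis unfolding DD_def by simp
qed

definition INV :: "nat \<Rightarrow> (nat \<Rightarrow> nat \<Rightarrow> nat set) \<Rightarrow> nat set \<Rightarrow> nat set \<Rightarrow> bool" where
  "INV j C U1 U2 \<longleftrightarrow> U1 \<subseteq> V1 \<and> U2 \<subseteq> V2 \<and> card U1 \<le> j * s 1 \<and> card U2 \<le> j * DD \<and>
     (\<forall>i<j. ordered_copy r s H V1 V2 (C i)) \<and> (\<forall>i<j. (\<Union>l\<in>{1..r}. C i l) \<subseteq> U1 \<union> U2) \<and>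
     (\<forall>i<j. \<forall>i'<j. i \<noteq> i' \<longrightarrow> (\<Union>l\<in>{1..r}. C i l) \<inter> (\<Union>l\<in>{1..r}. C i' l) = {}) \<and>
     (LL \<subseteq> V1 - U1 \<or> (qq - j) * (s 1 - 1) \<le> card ((V1 - U1) \<inter> LL))"

lemma INV_step:
  assumes cor: "\<forall>(X::nat set) F. finite X \<longrightarrow> card X \<le> n \<longrightarrow> F \<subseteq> {g. g \<subseteq> X \<and> card g = r - 1} \<longrightarrow>
       bet \<alpha> (s 1) * real n ^ (r - 1) \<le> real (card F) \<longrightarrow>
       (\<exists>W. (\<forall>i\<in>{1..r - 1}. W i \<subseteq> X \<and> card (W i) = s (Suc i)) \<and>
          (\<forall>i\<in>{1..r - 1}. \<forall>j\<in>{1..r - 1}. i \<noteq> j \<longrightarrow> W i \<inter> W j = {}) \<and>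
          (\<forall>f. (\<forall>i\<in>{1..r - 1}. f i \<in> W i) \<longrightarrow> f ` {1..r - 1} \<in> F))" and hL: "min (5 * real (s 1) * (real (s 1) - 1) / \<alpha>) ((real (s 1) - 1) / real (s 1) * real m) \<le> real (card LL)" and j: "j < qq" and I: "INV j C U1 U2"
  shows "\<exists>C' U1' U2'. INV (Suc j) C' U1' U2'"
proof -
  have U1: "U1 \<subseteq> V1" "card U1 \<le> j * s 1" and U2: "U2 \<subseteq> V2" "card U2 \<le> j * DD"
    and inv: "LL \<subseteq> V1 - U1 \<or> (qq - j) * (s 1 - 1) \<le> card ((V1 - U1) \<inter> LL)"
    using I unfolding INV_def by auto
  have oc: "\<forall>i<j. ordered_copy r s H V1 V2 (C i)" and cov: "\<forall>i<j. (\<Union>l\<in>{1..r}. C i l) \<subseteq> U1 \<union> U2"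
    and dj: "\<forall>i<j. \<forall>i'<j. i \<noteq> i' \<longrightarrow> (\<Union>l\<in>{1..r}. C i l) \<inter> (\<Union>l\<in>{1..r}. C i' l) = {}"
    using I unfolding INV_def by auto
  obtain W where W: "ordered_copy r s H V1 V2 W" "W 1 \<subseteq> V1 - U1" "\<forall>l\<in>{2..r}. W l \<subseteq> V2 - U2"
     "LL \<subseteq> V1 - (U1 \<union> W 1) \<or> (qq - Suc j) * (s 1 - 1) \<le> card ((V1 - (U1 \<union> W 1)) \<inter> LL)"
    using step[OF cor hL j U1 U2 inv] by blast
  define C' where "C' = C(j := W)"
  define U1' where "U1' = U1 \<union> W 1"
  define U2' where "U2' = U2 \<union> (\<Union>l\<in>{2..r}. W l)"
  have one: "(1::nat) \<in> {1..r}" using r2 by simp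
  have cW: "\<forall>i\<in>{1..r}. card (W i) = s i" using W(1) unfolding ordered_copy_def by blast
  have fU1: "finite U1" using U1 fin finite_subset by auto
  have fU2: "finite U2" using U2 fin finite_subset by auto
  have a1: "U1' \<subseteq> V1" unfolding U1'_def using U1 W(2) by auto
  have a2: "U2' \<subseteq> V2" unfolding U2'_def using U2 W(3) by auto
  have a3: "card U1' \<le> Suc j * s 1"
  proof -
    have "card U1' \<le> card U1 + card (W 1)" unfolding U1'_def by (rule card_Un_le)
    also have "card (W 1) = s 1" using cW one by blast
    finally show ?thesis using U1(2) by simp
  qed
  have a4: "card U2' \<le> Suc j * DD"
  proof -
    have "card U2' \<le> card U2 + card (\<Union>l\<in>{2..r}. W l)" unfolding U2'_def by (rule card_Un_le)
    also have "card (\<Union>l\<in>{2..r}. W l) \<le> (\<Sum>l\<in>{2..r}. card (W l))" by (rule card_UN_le) simp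
    also have "(\<Sum>l\<in>{2..r}. card (W l)) = (\<Sum>l\<in>{2..r}. s l)" using cW by (intro sum.cong) auto
    also have "\<dots> = DD" using DD_eq by simp
    finally show ?thesis using U2(2) by simp
  qed
  have a5: "\<forall>i<Suc j. ordered_copy r s H V1 V2 (C' i)" unfolding C'_def using oc W(1) by auto
  have Wcov: "(\<Union>l\<in>{1..r}. W l) \<subseteq> (V1 - U1) \<union> (V2 - U2)"
  proof
    fix x assume "x \<in> (\<Union>l\<in>{1..r}. W l)"
    then obtain l where l: "l \<in> {1..r}" "x \<in> W l" by auto
    show "x \<in> (V1 - U1) \<union> (V2 - U2)"
    proof (cases "l = 1")
      case True then show ?thesis using l W(2) by auto
    next
      case False then have "l \<in> {2..r}" using l by auto
      then show ?thesis using l W(3) by auto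
    qed
  qed
  have Wcov2: "(\<Union>l\<in>{1..r}. W l) \<subseteq> U1' \<union> U2'"
  proof
    fix x assume "x \<in> (\<Union>l\<in>{1..r}. W l)"
    then obtain l where l: "l \<in> {1..r}" "x \<in> W l" by auto
    show "x \<in> U1' \<union> U2'"
    proof (cases "l = 1")
      case True then show ?thesis using l unfolding U1'_def by auto
    next
      case False then have "l \<in> {2..r}" using l by auto
      then show ?thesis using l unfolding U2'_def by auto
    qed
  qed
  have a6: "\<forall>i<Suc j. (\<Union>l\<in>{1..r}. C' i l) \<subseteq> U1' \<union> U2'"
  proof (intro allI impI)
    fix i assume "i < Suc j"
    show "(\<Union>l\<in>{1..r}. C' i l) \<subseteq> U1' \<union> U2'"
    proof (cases "i = j")
      case True then show ?thesis using Wcov2 unfolding C'_def by simp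
    next
      case False
      then have "i < j" using \<open>i < Suc j\<close> by auto
      then have "(\<Union>l\<in>{1..r}. C i l) \<subseteq> U1 \<union> U2" using cov by blast
      then show ?thesis using False unfolding C'_def U1'_def U2'_def by auto
    qed
  qed
  have Wdis: "(\<Union>l\<in>{1..r}. W l) \<inter> (\<Union>l\<in>{1..r}. C i l) = {}" if "i < j" for i
  proof -
    have "(\<Union>l\<in>{1..r}. C i l) \<subseteq> U1 \<union> U2" using cov that by blast
    moreover have "((V1 - U1) \<union> (V2 - U2)) \<inter> (U1 \<union> U2) = {}" using U1 U2 fin(3) by auto
    ultimately show ?thesis using Wcov by blast
  qed
  have a7: "\<forall>i<Suc j. \<forall>i'<Suc j. i \<noteq> i' \<longrightarrow> (\<Union>l\<in>{1..r}. C' i l) \<inter> (\<Union>l\<in>{1..r}. C' i' l) = {}"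
  proof (intro allI impI)
    fix i i' assume i: "i < Suc j" and i': "i' < Suc j" and ii: "i \<noteq> i'"
    show "(\<Union>l\<in>{1..r}. C' i l) \<inter> (\<Union>l\<in>{1..r}. C' i' l) = {}"
    proof (cases "i = j")
      case True
      then have "i' < j" using i' ii by auto
      then show ?thesis using Wdis[of i'] True ii unfolding C'_def by simp
    next
      case False
      then have ij: "i < j" using i by auto
      show ?thesis
      proof (cases "i' = j")
        case True
        then show ?thesis using Wdis[OF ij] False unfolding C'_def by (simp add: Int_commute)
      next
        case False
        then have "i' < j" using i' by auto
        then show ?thesis using dj ij ii False \<open>i \<noteq> j\<close> unfolding C'_def by simp
      qed
    qed
  qed
  have a8: "LL \<subseteq> V1 - U1' \<or> (qq - Suc j) * (s 1 - 1) \<le> card ((V1 - U1') \<inter> LL)"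
    using W(4) unfolding U1'_def .
  have "INV (Suc j) C' U1' U2'" unfolding INV_def using a1 a2 a3 a4 a5 a6 a7 a8 by blast
  then show ?thesis by blast
qed

lemma allcopies:
  assumes cor: "\<forall>(X::nat set) F. finite X \<longrightarrow> card X \<le> n \<longrightarrow> F \<subseteq> {g. g \<subseteq> X \<and> card g = r - 1} \<longrightarrow>
       bet \<alpha> (s 1) * real n ^ (r - 1) \<le> real (card F) \<longrightarrow>
       (\<exists>W. (\<forall>i\<in>{1..r - 1}. W i \<subseteq> X \<and> card (W i) = s (Suc i)) \<and>
          (\<forall>i\<in>{1..r - 1}. \<forall>j\<in>{1..r - 1}. i \<noteq> j \<longrightarrow> W i \<inter> W j = {}) \<and>
          (\<forall>f. (\<forall>i\<in>{1..r - 1}. f i \<in> W i) \<longrightarrow> f ` {1..r - 1} \<in> F))" and hL: "min (5 * real (s 1) * (real (s 1) - 1) / \<alpha>) ((real (s 1) - 1) / real (s 1) * real m) \<le> real (card LL)"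
  shows "\<exists>C :: nat \<Rightarrow> nat \<Rightarrow> nat set. (\<forall>j < qq. ordered_copy r s H V1 V2 (C j)) \<and>
     (\<forall>j < qq. \<forall>k < qq. j \<noteq> k \<longrightarrow> (\<Union>i\<in>{1..r}. C j i) \<inter> (\<Union>i\<in>{1..r}. C k i) = {})"
proof -
  have "j \<le> qq \<Longrightarrow> \<exists>C U1 U2. INV j C U1 U2" for j
  proof (induction j)
    case 0
    have "INV 0 (\<lambda>_ _. {}) {} {}" unfolding INV_def LL_def by auto
    then show ?case by blast
  next
    case (Suc j)
    then have "j \<le> qq" "j < qq" by auto
    then obtain C U1 U2 where I: "INV j C U1 U2" using Suc.IH by blast
    show ?case by (rule INV_step[OF cor hL \<open>j < qq\<close> I])
  qed
  then obtain C U1 U2 where I: "INV qq C U1 U2" by blast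
  have h1: "\<forall>i<qq. ordered_copy r s H V1 V2 (C i)" using I unfolding INV_def by (elim conjE)
  have h2: "\<forall>i<qq. \<forall>i'<qq. i \<noteq> i' \<longrightarrow> (\<Union>l\<in>{1..r}. C i l) \<inter> (\<Union>l\<in>{1..r}. C i' l) = {}"
    using I unfolding INV_def by (elim conjE)
  show ?thesis using h1 h2 by (intro exI[of _ C] conjI)
qed

end


theorem lemma5p2:
  fixes r :: nat and s :: "nat \<Rightarrow> nat" and \<alpha> :: real
  assumes "r \<ge> 2"
    and "s 1 \<ge> 2"
    and "\<forall>i\<in>{1..<r}. s i \<le> s (Suc i)"
    and "\<alpha> > 0"
  shows "\<exists>n0::nat. \<forall>n\<ge>n0. \<forall>(H :: nat set set) V1 V2 m.
    semibipartite r H V1 V2 \<and> card V1 = m \<and> card V2 = n \<and>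
    real m \<le> \<alpha> * real n / (8 * (real (\<Sum>i=1..r. s i) - real (s 1))) \<and>
    (\<forall>v\<in>V1. real (hdeg H v) \<ge> \<alpha> * real n ^ (r - 1)) \<and>
    real (card {v \<in> V1. real (hdeg H v) \<ge>
        real (n choose (r - 1)) - \<alpha> * real n ^ (r - 1) / (2 * real (s 1))})
      \<ge> min (5 * real (s 1) * (real (s 1) - 1) / \<alpha>) ((real (s 1) - 1) / real (s 1) * real m)
    \<longrightarrow> (\<exists>C :: nat \<Rightarrow> nat \<Rightarrow> nat set.
          (\<forall>j < m div s 1. ordered_copy r s H V1 V2 (C j)) \<and>
          (\<forall>j < m div s 1. \<forall>k < m div s 1. j \<noteq> k \<longrightarrow>
             (\<Union>i\<in>{1..r}. C j i) \<inter> (\<Union>i\<in>{1..r}. C k i) = {}))"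
proof -
  have bpos: "bet \<alpha> (s 1) > 0" unfolding bet_def using assms(4) by simp
  obtain N where N: "\<forall>n\<ge>N. \<forall>(X::nat set) F. finite X \<longrightarrow> card X \<le> n \<longrightarrow>
     F \<subseteq> {g. g \<subseteq> X \<and> card g = r - 1} \<longrightarrow> bet \<alpha> (s 1) * real n ^ (r - 1) \<le> real (card F) \<longrightarrow>
     (\<exists>W. (\<forall>i\<in>{1..r - 1}. W i \<subseteq> X \<and> card (W i) = s (Suc i)) \<and>
          (\<forall>i\<in>{1..r - 1}. \<forall>j\<in>{1..r - 1}. i \<noteq> j \<longrightarrow> W i \<inter> W j = {}) \<and>
          (\<forall>f. (\<forall>i\<in>{1..r - 1}. f i \<in> W i) \<longrightarrow> f ` {1..r - 1} \<in> F))"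
    using core[where t="\<lambda>i. s (Suc i)" and k="r - 1", rule_format, OF bpos] by (rule exE)
  show ?thesis
  proof (intro exI[of _ "max N 1"] allI impI)
    fix n :: nat and H :: "nat set set" and V1 V2 :: "nat set" and m :: nat
    assume n: "max N 1 \<le> n"
    assume h: "semibipartite r H V1 V2 \<and> card V1 = m \<and> card V2 = n \<and>
    real m \<le> \<alpha> * real n / (8 * (real (\<Sum>i=1..r. s i) - real (s 1))) \<and>
    (\<forall>v\<in>V1. real (hdeg H v) \<ge> \<alpha> * real n ^ (r - 1)) \<and>
    real (card {v \<in> V1. real (hdeg H v) \<ge>
        real (n choose (r - 1)) - \<alpha> * real n ^ (r - 1) / (2 * real (s 1))})
      \<ge> min (5 * real (s 1) * (real (s 1) - 1) / \<alpha>) ((real (s 1) - 1) / real (s 1) * real m)"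
    have nN: "n \<ge> 1" "n \<ge> N" using n by auto
    note h1 = conjunct1[OF h]
    note h2 = conjunct1[OF conjunct2[OF h]]
    note h3 = conjunct1[OF conjunct2[OF conjunct2[OF h]]]
    note h4 = conjunct1[OF conjunct2[OF conjunct2[OF conjunct2[OF h]]]]
    note h5 = conjunct1[OF conjunct2[OF conjunct2[OF conjunct2[OF conjunct2[OF h]]]]]
    note h6 = conjunct2[OF conjunct2[OF conjunct2[OF conjunct2[OF conjunct2[OF h]]]]]
    interpret SB r s \<alpha> H V1 V2 n m
      by (rule SB.intro[OF assms(1) assms(2) assms(3) assms(4) h1 h2 h3 h4 h5 nN(1)])
    have cor: "\<forall>(X::nat set) F. finite X \<longrightarrow> card X \<le> n \<longrightarrow> F \<subseteq> {g. g \<subseteq> X \<and> card g = r - 1} \<longrightarrow>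
       bet \<alpha> (s 1) * real n ^ (r - 1) \<le> real (card F) \<longrightarrow>
       (\<exists>W. (\<forall>i\<in>{1..r - 1}. W i \<subseteq> X \<and> card (W i) = s (Suc i)) \<and>
          (\<forall>i\<in>{1..r - 1}. \<forall>j\<in>{1..r - 1}. i \<noteq> j \<longrightarrow> W i \<inter> W j = {}) \<and>
          (\<forall>f. (\<forall>i\<in>{1..r - 1}. f i \<in> W i) \<longrightarrow> f ` {1..r - 1} \<in> F))"
      by (rule N[THEN spec, THEN mp, OF nN(2)])
    have hL: "min (5 * real (s 1) * (real (s 1) - 1) / \<alpha>) ((real (s 1) - 1) / real (s 1) * real m) \<le> real (card LL)"
      unfolding LL_def by (rule h6)
    show "\<exists>C :: nat \<Rightarrow> nat \<Rightarrow> nat set.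
          (\<forall>j < m div s 1. ordered_copy r s H V1 V2 (C j)) \<and>
          (\<forall>j < m div s 1. \<forall>k < m div s 1. j \<noteq> k \<longrightarrow>
             (\<Union>i\<in>{1..r}. C j i) \<inter> (\<Union>i\<in>{1..r}. C k i) = {})"
      using allcopies[OF cor hL] unfolding qq_def .
  qed
qed


end
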